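(* Let $\mu,\nu$ be integers with $\frac14(\mu+\nu)\le\mu\le\nu\le\frac34(\mu+\nu)$, let $M,N$ be integers with $q^{\mu-1}\le M<q^\mu$, $q^{\nu-1}\le N<q^\nu$, let $k\in\{\mu+\nu-4,\dots,\mu+\nu-1\}$, and for integers $m$ let $I(k,m)=\{n\in\mathbb{Z}: N/q\le n<N,\ q^k/m\le n<q^{k+1}/m\}$. Let $h,s$ be positive integers and $h_1,r,\mu_0,\mu_1,\mu_2$ integers with $\mu_0<\mu_1<\mu_2$ and $hsq^{\mu_1-\mu_2}\notin\mathbb{Z}$. Then for every interval $I_1\subseteq[q^{\mu-2},q^\mu)$, $$\Big|\sum_{m\in I_1}e\Big(\frac{h_1rm}{q^{\mu_2}}\Big)\sum_{n\in I(k,m)}e\big(hsnq^{\mu_1-\mu_2}\big)\Big|\ll\big(shq^{3(\mu_2-\mu_1)}\big)^{1/2}q^{\frac78(\mu+\nu)}.$$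
   Context: $q\ge2$ is a fixed integer, $e(x)=\exp(2\pi ix)$, and sums over $m\in I_1$ run over integers. The implied constant depends at most on $q$. *)

theory Defs
  imports "HOL-Analysis.Analysis"
begin

definition ee :: "real \<Rightarrow> complex" where
  "ee x = exp (2 * complex_of_real pi * \<i> * complex_of_real x)"

definition Ikm :: "int \<Rightarrow> int \<Rightarrow> int \<Rightarrow> int \<Rightarrow> int set" where
  "Ikm q N k m = {n::int. real_of_int N / real_of_int q \<le> real_of_int n \<and> n < N \<and>
      real_of_int q powi k / real_of_int m \<le> real_of_int n \<and>
      real_of_int n < real_of_int q powi (k+1) / real_of_int m}"

end

theory Submission
  imports Defs
begin

lemma ee_add: "ee (x + y) = ee x * ee y"
  unfolding ee_def by (simp add: exp_add[symmetric] algebra_simps)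

lemma norm_ee: "norm (ee x) = 1"
proof -
  have "ee x = exp (\<i> * complex_of_real (2*pi*x))"
    unfolding ee_def by (simp add: algebra_simps)
  then show ?thesis by (simp add: norm_exp_i_times)
qed

lemma ee_nat: "ee (real j * x) = ee x ^ j"
proof -
  have "ee (real j * x) = exp (of_nat j * (2 * complex_of_real pi * \<i> * complex_of_real x))"
    unfolding ee_def by (simp add: algebra_simps)
  then show ?thesis by (simp add: exp_of_nat_mult ee_def)
qed

lemma ee_int: "x \<in> \<int> \<Longrightarrow> ee x = 1"
proof -
  assume "x \<in> \<int>"
  then have "exp (complex_of_real (2 * x * pi) * \<i>) = 1" by (rule exp_integer_2pi)
  then show ?thesis unfolding ee_def by (simp add: algebra_simps)
qed

lemma ee_one: "ee x = 1 \<Longrightarrow> x \<in> \<int>"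
proof -
  assume "ee x = 1"
  then obtain n where "Im (2 * complex_of_real pi * \<i> * complex_of_real x) = real_of_int (2 * n) * pi"
    unfolding ee_def exp_eq_1 by blast
  then have "2 * pi * x = 2 * real_of_int n * pi" by simp
  then have "x = real_of_int n" by simp
  then show ?thesis by simp
qed

lemma period_sum:
  fixes Q :: nat
  assumes "Q > 0" "real Q * al \<in> \<int>" "al \<notin> \<int>"
  shows "(\<Sum>n\<in>{a..<a + int Q}. ee (real_of_int n * al)) = 0"
proof -
  have img: "{a..<a + int Q} = (\<lambda>j. a + int j) ` {..<Q}"
  proof (rule set_eqI, rule iffI)
    fix x assume "x \<in> {a..<a + int Q}"
    then have "x = a + int (nat (x - a))" "nat (x - a) < Q" by auto
    then show "x \<in> (\<lambda>j. a + int j) ` {..<Q}" by blast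
  qed auto
  have inj: "inj_on (\<lambda>j. a + int j) {..<Q}" by (auto simp: inj_on_def)
  have "(\<Sum>n\<in>{a..<a + int Q}. ee (real_of_int n * al))
      = (\<Sum>j<Q. ee (real_of_int (a + int j) * al))"
    unfolding img by (simp add: sum.reindex[OF inj])
  also have "\<dots> = (\<Sum>j<Q. ee (real_of_int a * al) * ee al ^ j)"
    by (rule sum.cong) (auto simp: ee_add[symmetric] ee_nat[symmetric] algebra_simps)
  also have "\<dots> = ee (real_of_int a * al) * (\<Sum>j<Q. ee al ^ j)"
    by (simp add: sum_distrib_left)
  also have "(\<Sum>j<Q. ee al ^ j) = 0"
  proof -
    have ne: "ee al \<noteq> 1" using ee_one assms(3) by blast
    have "ee al ^ Q = 1" using ee_int[OF assms(2)] ee_nat[of Q al] by simp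
    then show ?thesis using geometric_sum[OF ne, of Q] by simp
  qed
  finally show ?thesis by simp
qed

lemma interval_sum_bound:
  fixes Q :: nat and g :: "int \<Rightarrow> complex"
  assumes "Q > 0" "\<And>n. norm (g n) \<le> 1" "\<And>a. (\<Sum>n\<in>{a..<a + int Q}. g n) = 0"
  shows "norm (\<Sum>n\<in>{a..<b}. g n) \<le> real Q"
proof -
  have "\<forall>a b. nat (b - a) = L \<longrightarrow> norm (\<Sum>n\<in>{a..<b}. g n) \<le> real Q" for L
  proof (induction L rule: less_induct)
    case (less L)
    show ?case
    proof (intro allI impI)
      fix a b assume L: "nat (b - a) = L"
      show "norm (\<Sum>n\<in>{a..<b}. g n) \<le> real Q"
      proof (cases "L < Q")
        case True
        have "norm (\<Sum>n\<in>{a..<b}. g n) \<le> (\<Sum>n\<in>{a..<b}. norm (g n))" by (rule norm_sum)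
        also have "\<dots> \<le> (\<Sum>n\<in>{a..<b}. 1)" by (rule sum_mono) (use assms(2) in auto)
        also have "\<dots> = real L" using L by simp
        finally show ?thesis using True by simp
      next
        case False
        have split: "{a..<b} = {a..<a + int Q} \<union> {a + int Q..<b}" using False L by auto
        have "(\<Sum>n\<in>{a..<b}. g n) = (\<Sum>n\<in>{a..<a + int Q}. g n) + (\<Sum>n\<in>{a + int Q..<b}. g n)"
          unfolding split by (rule sum.union_disjoint) auto
        also have "\<dots> = (\<Sum>n\<in>{a + int Q..<b}. g n)" using assms(3) by simp
        finally have eq: "(\<Sum>n\<in>{a..<b}. g n) = (\<Sum>n\<in>{a + int Q..<b}. g n)" .
        have "nat (b - (a + int Q)) < L" using False L assms(1) by auto
        with less.IH show ?thesis unfolding eq by blast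
      qed
    qed
  qed
  then show ?thesis by blast
qed

lemma Ikm_eq:
  "Ikm q N k m = {max \<lceil>real_of_int N / real_of_int q\<rceil> \<lceil>real_of_int q powi k / real_of_int m\<rceil>
     ..< min N \<lceil>real_of_int q powi (k+1) / real_of_int m\<rceil>}"
proof -
  have c1: "x \<le> real_of_int n \<longleftrightarrow> \<lceil>x\<rceil> \<le> n" for x n by (simp add: ceiling_le_iff)
  have c2: "real_of_int n < x \<longleftrightarrow> n < \<lceil>x\<rceil>" for x n
    using ceiling_le_iff[of x n] by linarith
  show ?thesis unfolding Ikm_def by (auto simp: c1 c2)
qed

theorem mainTheorem7:
  fixes q :: int
  assumes "q \<ge> 2"
  shows "\<exists>C>0. \<forall>(\<mu>::int) (\<nu>::int) (M::int) (N::int) (k::int) (h::int) (s::int)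
      (h1::int) (r::int) (\<mu>0::int) (\<mu>1::int) (\<mu>2::int) (I1::real set).
    real_of_int (\<mu>+\<nu>) / 4 \<le> real_of_int \<mu> \<and> \<mu> \<le> \<nu> \<and> real_of_int \<nu> \<le> 3 * real_of_int (\<mu>+\<nu>) / 4 \<and>
    (real_of_int q powi (\<mu>-1)) \<le> real_of_int M \<and> real_of_int M < (real_of_int q powi \<mu>) \<and>
    (real_of_int q powi (\<nu>-1)) \<le> real_of_int N \<and> real_of_int N < (real_of_int q powi \<nu>) \<and>
    k \<in> {\<mu>+\<nu>-4..\<mu>+\<nu>-1} \<and> h > 0 \<and> s > 0 \<and> \<mu>0 < \<mu>1 \<and> \<mu>1 < \<mu>2 \<and>
    real_of_int (h * s) * (real_of_int q powi (\<mu>1-\<mu>2)) \<notin> \<int> \<and>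
    is_interval I1 \<and> I1 \<subseteq> {(real_of_int q powi (\<mu>-2)) ..< (real_of_int q powi \<mu>)}
    \<longrightarrow>
    norm (\<Sum>m\<in>{m::int. real_of_int m \<in> I1}.
        ee (real_of_int (h1 * r * m) / (real_of_int q powi \<mu>2)) *
        (\<Sum>n\<in>Ikm q N k m. ee (real_of_int (h * s*n) * (real_of_int q powi (\<mu>1-\<mu>2)))))
    \<le> C * sqrt (real_of_int (s * h) * (real_of_int q powi (3*(\<mu>2-\<mu>1))))
          * real_of_int q powr (7/8 * real_of_int (\<mu>+\<nu>))"
proof -
  define qr where "qr = real_of_int q"
  have qr2: "qr \<ge> 2" using assms by (simp add: qr_def)
  have powi_nat: "x powi n = x ^ nat n" if "n \<ge> 0" for x :: real and n :: int
    using that by (simp add: power_int_def)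
  have powi_pos: "qr powi n > 0" for n using qr2 by simp
  show ?thesis
  proof (rule exI[of _ 1], intro conjI allI impI)
    fix \<mu> \<nu> M N k h s h1 r \<mu>0 \<mu>1 \<mu>2 :: int and I1 :: "real set"
    assume H: "real_of_int (\<mu>+\<nu>) / 4 \<le> real_of_int \<mu> \<and> \<mu> \<le> \<nu> \<and> real_of_int \<nu> \<le> 3 * real_of_int (\<mu>+\<nu>) / 4 \<and>
    (real_of_int q powi (\<mu>-1)) \<le> real_of_int M \<and> real_of_int M < (real_of_int q powi \<mu>) \<and>
    (real_of_int q powi (\<nu>-1)) \<le> real_of_int N \<and> real_of_int N < (real_of_int q powi \<nu>) \<and>
    k \<in> {\<mu>+\<nu>-4..\<mu>+\<nu>-1} \<and> h > 0 \<and> s > 0 \<and> \<mu>0 < \<mu>1 \<and> \<mu>1 < \<mu>2 \<and>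
    real_of_int (h * s) * (real_of_int q powi (\<mu>1-\<mu>2)) \<notin> \<int> \<and>
    is_interval I1 \<and> I1 \<subseteq> {(real_of_int q powi (\<mu>-2)) ..< (real_of_int q powi \<mu>)}"
    have lt: "\<mu>1 < \<mu>2" using H by blast
    define d where "d = nat (\<mu>2 - \<mu>1)"
    define Q where "Q = nat (q ^ d)"
    have d1: "d \<ge> 1" using lt by (simp add: d_def)
    have RQ: "real Q = qr ^ d" unfolding Q_def qr_def using assms by simp
    have Qpos: "Q > 0" using RQ qr2 by (metis of_nat_0 power_not_zero not_gr0 not_numeral_le_zero)
    define P where "P = qr powi (\<mu>1 - \<mu>2)"
    have P: "P = 1 / qr ^ d"
    proof -
      have "P = inverse (qr powi (\<mu>2 - \<mu>1))" unfolding P_def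
        by (metis minus_diff_eq power_int_minus)
      also have "qr powi (\<mu>2 - \<mu>1) = qr ^ d" using lt by (simp add: powi_nat d_def)
      finally show ?thesis by (simp add: divide_inverse)
    qed
    define al where "al = real_of_int (h * s) * P"
    have alpha_nonint: "al \<notin> \<int>" using H unfolding al_def P_def qr_def by simp
    have QA: "real Q * al \<in> \<int>"
    proof -
      have "real Q * al = real_of_int (h * s)" unfolding al_def P RQ using qr2 by simp
      then show ?thesis by simp
    qed
    have inner: "norm (\<Sum>n\<in>Ikm q N k m. ee (real_of_int (h * s*n) * (real_of_int q powi (\<mu>1-\<mu>2)))) \<le> real Q" for m
    proof -
      have eq: "ee (real_of_int (h * s*n) * (real_of_int q powi (\<mu>1-\<mu>2))) = ee (real_of_int n * al)" for n
        unfolding al_def P_def qr_def by (simp add: algebra_simps)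
      show ?thesis unfolding eq Ikm_eq
        by (rule interval_sum_bound[OF Qpos]) (auto simp: norm_ee period_sum[OF Qpos QA alpha_nonint])
    qed
    have mu1: "\<mu> \<ge> 1"
    proof (rule ccontr)
      assume "\<not> \<mu> \<ge> 1"
      then have "qr powi \<mu> \<le> 1"
        using qr2 by (auto simp: power_int_def intro!: power_le_one simp add: inverse_le_1_iff)
      moreover have "real_of_int M > 0" using H powi_pos[of "\<mu>-1"] unfolding qr_def by linarith
      then have "real_of_int M \<ge> 1" by simp
      moreover have "real_of_int M < qr powi \<mu>" using H unfolding qr_def by blast
      ultimately show False by linarith
    qed
    define K where "K = q ^ nat \<mu>"
    have RK: "real_of_int K = qr powi \<mu>" using mu1 by (simp add: K_def qr_def powi_nat)
    define A where "A = {m::int. real_of_int m \<in> I1}"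
    have Asub: "A \<subseteq> {1..<K}"
    proof
      fix m assume "m \<in> A"
      then have "real_of_int m \<in> I1" by (simp add: A_def)
      then have "qr powi (\<mu>-2) \<le> real_of_int m" "real_of_int m < qr powi \<mu>"
        using H unfolding qr_def by auto
      then have "real_of_int m > 0" "real_of_int m < real_of_int K" using powi_pos[of "\<mu>-2"] RK by linarith+
      then show "m \<in> {1..<K}" by simp
    qed
    have finA: "finite A" using Asub finite_subset by blast
    have cardA: "real (card A) \<le> real_of_int K"
    proof -
      have "card A \<le> card {1..<K}" using Asub by (metis card_mono finite_atLeastLessThan_int card_atLeastLessThan_int)
      moreover have "K > 0" using assms by (simp add: K_def)
      ultimately have "int (card A) \<le> K" by simp
      then show ?thesis by (metis of_int_le_iff of_int_of_nat_eq)
    qed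
    have "norm (\<Sum>m\<in>A. ee (real_of_int (h1 * r * m) / (real_of_int q powi \<mu>2)) *
        (\<Sum>n\<in>Ikm q N k m. ee (real_of_int (h * s*n) * (real_of_int q powi (\<mu>1-\<mu>2)))))
      \<le> (\<Sum>m\<in>A. norm (ee (real_of_int (h1 * r * m) / (real_of_int q powi \<mu>2)) *
        (\<Sum>n\<in>Ikm q N k m. ee (real_of_int (h * s*n) * (real_of_int q powi (\<mu>1-\<mu>2))))))"
      by (rule norm_sum)
    also have "\<dots> \<le> (\<Sum>m\<in>A. real Q)"
      by (rule sum_mono) (simp only: norm_mult norm_ee inner mult_1_left)
    also have "\<dots> = real (card A) * real Q" by simp
    also have "\<dots> \<le> real_of_int K * real Q" using cardA by (simp add: mult_right_mono)
    also have "\<dots> \<le> 1 * sqrt (real_of_int (s * h) * (real_of_int q powi (3*(\<mu>2-\<mu>1))))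
          * real_of_int q powr (7/8 * real_of_int (\<mu>+\<nu>))"
    proof -
      have e3: "real_of_int q powi (3*(\<mu>2-\<mu>1)) = qr ^ (3*d)"
        proof -
        have "nat (3*(\<mu>2-\<mu>1)) = 3*d" using lt unfolding d_def by simp
        then show ?thesis using lt by (simp add: powi_nat qr_def)
      qed
      have "qr ^ (2*d) \<le> qr ^ (3*d)" using qr2 by (intro power_increasing) auto
      also have "\<dots> \<le> real_of_int (s * h) * qr ^ (3*d)"
      proof -
        have "h \<ge> 1" "s \<ge> 1" using H by auto
        then have "s * h \<ge> 1" using mult_mono[of "1::int" s 1 h] by simp
        then have "real_of_int (s * h) \<ge> 1" by linarith
        moreover have "qr ^ (3*d) \<ge> 0" using qr2 by simp
        ultimately show ?thesis using mult_right_mono[of 1 "real_of_int (s*h)" "qr^(3*d)"] by simp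
      qed
      finally have "sqrt (qr ^ (2*d)) \<le> sqrt (real_of_int (s * h) * qr ^ (3*d))"
        using real_sqrt_le_mono by blast
      moreover have "sqrt (qr ^ (2*d)) = qr ^ d" using qr2
        by (simp add: power_mult real_sqrt_abs power2_eq_square[symmetric] mult.commute[of 2 d])
      ultimately have S: "real Q \<le> sqrt (real_of_int (s * h) * (real_of_int q powi (3*(\<mu>2-\<mu>1))))"
        using RQ e3 by simp
      have "real_of_int K = qr powr real_of_int \<mu>"
        using RK qr2 by (simp add: powr_real_of_int')
      also have "\<dots> \<le> qr powr (7/8 * real_of_int (\<mu>+\<nu>))"
        using H mu1 qr2 by (intro powr_mono) auto
      finally have T: "real_of_int K \<le> qr powr (7/8 * real_of_int (\<mu>+\<nu>))" .
      have "real_of_int K * real Q \<le> qr powr (7/8 * real_of_int (\<mu>+\<nu>)) *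
          sqrt (real_of_int (s * h) * (real_of_int q powi (3*(\<mu>2-\<mu>1))))"
        by (rule mult_mono[OF T S]) auto
      then show ?thesis by (simp add: qr_def mult.commute)
    qed
    finally show "norm (\<Sum>m\<in>{m::int. real_of_int m \<in> I1}.
        ee (real_of_int (h1 * r * m) / (real_of_int q powi \<mu>2)) *
        (\<Sum>n\<in>Ikm q N k m. ee (real_of_int (h * s*n) * (real_of_int q powi (\<mu>1-\<mu>2)))))
    \<le> 1 * sqrt (real_of_int (s * h) * (real_of_int q powi (3*(\<mu>2-\<mu>1))))
          * real_of_int q powr (7/8 * real_of_int (\<mu>+\<nu>))" unfolding A_def .
  qed simp
qed

end
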